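(* Let $(\xi_j)_{j\ge 1}$ be independent, identically distributed random variables taking values in $\{-1,0,1\}$ with $\max_{x\in\{-1,0,1\}} \mathbb{P}(\xi_1 = x) < \frac{1}{\sqrt{3}}$. There exists a constant $C>0$ (depending only on the distribution of $\xi_1$) such that for every $N\ge 1$ and all pairwise distinct integers $a_1,\ldots,a_N$, \[\max_{m\in\mathbb{Z}} \mathbb{P}\left(\sum_{j=1}^N \xi_j a_j = m\right) \le \frac{C}{N^{3/2}}.\] *)

theory Defs
  imports "HOL-Probability.Probability"
begin

end

theory Submission
  imports Defs "HOL-Computational_Algebra.Primes"
begin


definition dQ :: "int \<Rightarrow> int \<Rightarrow> int" where
  "dQ Q z = min (z mod Q) (Q - z mod Q)"

lemma dQ_nonneg: "Q > 0 \<Longrightarrow> 0 \<le> dQ Q z"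
proof -
  assume "Q > 0"
  then have "0 \<le> z mod Q" "z mod Q < Q" by auto
  then show ?thesis unfolding dQ_def by (simp add: min_def)
qed

lemma dQ_le_half: "Q > 0 \<Longrightarrow> 2 * dQ Q z \<le> Q"
  unfolding dQ_def min_def by auto

lemma dQ_mod: "dQ Q (z mod Q) = dQ Q z"
  unfolding dQ_def by simp

lemma dQ_zero: "Q \<ge> 0 \<Longrightarrow> dQ Q 0 = 0"
  unfolding dQ_def by simp

lemma min_tri_aux:
  fixes x y s Q :: int
  assumes "0\<le>x" "x<Q" "0\<le>y" "y<Q" "s = x+y \<or> s = x+y-Q"
  shows "min s (Q-s) \<le> min x (Q-x) + min y (Q-y)"
  using assms by (cases "x \<le> Q - x"; cases "y \<le> Q-y"; cases "s \<le> Q - s"; auto simp: min_def)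

lemma dQ_triangle:
  assumes "Q > 0" shows "dQ Q (z + w) \<le> dQ Q z + dQ Q w"
proof -
  let ?x = "z mod Q" and ?y = "w mod Q"
  have x: "0 \<le> ?x" "?x < Q" and y: "0 \<le> ?y" "?y < Q" using assms by auto
  have "(z + w) mod Q = (?x + ?y) mod Q" by (simp add: mod_add_eq)
  moreover have "(?x + ?y) mod Q = ?x + ?y \<or> (?x + ?y) mod Q = ?x + ?y - Q"
  proof (cases "?x + ?y < Q")
    case True then show ?thesis using x y by (simp add: mod_pos_pos_trivial)
  next
    case False
    then have "(?x + ?y) mod Q = (?x + ?y - Q) mod Q" by (simp add: mod_diff_right_eq[symmetric])
    also have "\<dots> = ?x + ?y - Q" using False x y by (intro mod_pos_pos_trivial) linarith+
    finally show ?thesis by simp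
  qed
  ultimately show ?thesis unfolding dQ_def using x y min_tri_aux by presburger
qed

lemma dQ_cos:
  assumes "Q > 0"
  shows "cos (2 * pi * real_of_int z / real_of_int Q) = cos (2 * pi * real_of_int (dQ Q z) / real_of_int Q)"
proof -
  define k where "k = z div Q"
  have z: "z = k * Q + z mod Q" by (simp add: k_def)
  have "cos (2 * pi * real_of_int z / real_of_int Q) = cos (2 * pi * real_of_int (z mod Q) / Q + 2 * pi * real_of_int k)"
    using assms by (subst z) (simp add: field_simps)
  also have "\<dots> = cos (2 * pi * real_of_int (z mod Q) / Q)"
    by (simp add: cos_add)
  finally have 1: "cos (2 * pi * real_of_int z / real_of_int Q) = cos (2 * pi * real_of_int (z mod Q) / Q)" .
  have 2: "cos (2 * pi * real_of_int (Q - z mod Q) / Q) = cos (2 * pi * real_of_int (z mod Q) / Q)"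
  proof -
    have "2 * pi * real_of_int (Q - z mod Q) / Q = - (2 * pi * real_of_int (z mod Q) / Q) + 2 * pi"
      using assms by (simp add: field_simps)
    then show ?thesis by simp
  qed
  show ?thesis using 1 2 unfolding dQ_def by (cases "z mod Q \<le> Q - z mod Q") (auto simp: min_def)
qed



definition sumset :: "int \<Rightarrow> int set \<Rightarrow> int set \<Rightarrow> int set" where
  "sumset Q A B = (\<lambda>(a,b). (a+b) mod Q) ` (A \<times> B)"

lemma sumset_iff: "x \<in> sumset Q A B \<longleftrightarrow> (\<exists>a\<in>A. \<exists>b\<in>B. x = (a+b) mod Q)"
  unfolding sumset_def by auto

lemma sumset_sub: "Q > 0 \<Longrightarrow> sumset Q A B \<subseteq> {0..<Q}"
  unfolding sumset_def by auto

lemma sumset_finite: "finite A \<Longrightarrow> finite B \<Longrightarrow> finite (sumset Q A B)"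
  unfolding sumset_def by auto

lemma transl_inj: fixes Q t :: int shows "inj_on (\<lambda>a. (a + t) mod Q) {0..<Q}"
proof (rule inj_onI)
  fix x y assume x: "x \<in> {0..<Q}" and y: "y \<in> {0..<Q}" and e: "(x + t) mod Q = (y + t) mod Q"
  have "((x + t) - t) mod Q = ((y + t) - t) mod Q"
    by (rule mod_diff_cong[OF e refl])
  then have "x mod Q = y mod Q" by simp
  then show "x = y" using x y by simp
qed

lemma card_sub_Q:
  fixes Q :: int
  assumes "A \<subseteq> {0..<Q}" "Q > 0" shows "int (card A) \<le> Q"
proof -
  have "card A \<le> card {0..<Q}" using assms by (intro card_mono) auto
  then show ?thesis using assms(2) by simp
qed

lemma card_transl:
  fixes Q t :: int
  assumes "A \<subseteq> {0..<Q}" shows "card ((\<lambda>a. (a + t) mod Q) ` A) = card A"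
  using assms by (intro card_image inj_on_subset[OF transl_inj])

lemma sumset_card_ge:
  fixes Q :: int
  assumes "Q > 0" "A \<subseteq> {0..<Q}" "b \<in> B" "finite B"
  shows "card A \<le> card (sumset Q A B)"
proof -
  have "(\<lambda>a. (a + b) mod Q) ` A \<subseteq> sumset Q A B" using assms(3) unfolding sumset_def by force
  moreover have "finite A" using assms(2) finite_subset by blast
  then have "finite (sumset Q A B)" using sumset_finite assms(4) by blast
  ultimately have "card ((\<lambda>a. (a + b) mod Q) ` A) \<le> card (sumset Q A B)" by (intro card_mono)
  then show ?thesis using card_transl[OF assms(2)] by simp
qed

lemma closure_full:
  fixes Q dd a0 :: int
  assumes Q: "prime Q" and A: "A \<subseteq> {0..<Q}" "a0 \<in> A"
    and nd: "\<not> Q dvd dd" and cl: "\<And>a. a \<in> A \<Longrightarrow> (a + dd) mod Q \<in> A"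
  shows "A = {0..<Q}"
proof -
  have Qpos: "Q > 0" using Q prime_gt_0_int by blast
  have it: "(a0 + int k * dd) mod Q \<in> A" for k :: nat
  proof (induction k)
    case 0 then show ?case using A by auto
  next
    case (Suc k)
    have "a0 + int (Suc k) * dd = (a0 + int k * dd) + dd" by (simp add: algebra_simps)
    then have "(a0 + int (Suc k) * dd) mod Q = ((a0 + int k * dd) mod Q + dd) mod Q"
      by (metis mod_add_left_eq)
    then show ?case using cl[OF Suc] by simp
  qed
  have cop: "coprime dd Q" using prime_imp_coprime[OF Q nd] by (simp add: coprime_commute)
  obtain u v where uv: "u * dd + v * Q = 1" using bezout_int[of dd Q] cop by auto
  show ?thesis
  proof
    show "{0..<Q} \<subseteq> A"
    proof
      fix y assume y: "y \<in> {0..<Q}"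
      define w where "w = (y - a0) * u"
      define k where "k = nat (w mod Q)"
      have k: "int k = w mod Q" using Qpos by (simp add: k_def)
      have e1: "(a0 + int k * dd) mod Q = (a0 + w * dd) mod Q"
        unfolding k by (metis mod_add_right_eq mod_mult_left_eq)
      have e2: "a0 + w * dd = y + (- ((y - a0) * v)) * Q"
      proof -
        have "w * dd = (y - a0) * (u * dd)" by (simp add: w_def)
        also have "u * dd = 1 - v * Q" using uv by simp
        finally show ?thesis by (simp add: algebra_simps)
      qed
      have "(a0 + w * dd) mod Q = y mod Q" unfolding e2 by (rule mod_mult_self1)
      then have "(a0 + int k * dd) mod Q = y"
        using e1 y by simp
      then show "y \<in> A" using it[of k] by simp
    qed
  qed (use A in auto)
qed

lemma cauchy_davenport_aux:
  fixes Q :: int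
  assumes Q: "prime Q"
  shows "\<forall>A B. card B = n \<longrightarrow> A \<subseteq> {0..<Q} \<longrightarrow> B \<subseteq> {0..<Q} \<longrightarrow> A \<noteq> {} \<longrightarrow> B \<noteq> {} \<longrightarrow>
     min Q (int (card A) + int (card B) - 1) \<le> int (card (sumset Q A B))"
proof (induction n rule: less_induct)
  case (less n)
  have Qpos: "Q > 0" using Q prime_gt_0_int by blast
  show ?case
  proof (intro allI impI)
    fix A B assume cB: "card B = n" and AQ: "A \<subseteq> {0..<Q}" and BQ: "B \<subseteq> {0..<Q}"
      and Ane: "A \<noteq> {}" and Bne: "B \<noteq> {}"
    have finA: "finite A" and finB: "finite B" using AQ BQ finite_subset by auto
    obtain b1 where b1: "b1 \<in> B" using Bne by auto
    have ge: "card A \<le> card (sumset Q A B)" using sumset_card_ge[OF Qpos AQ b1 finB] .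
    show "min Q (int (card A) + int (card B) - 1) \<le> int (card (sumset Q A B))"
    proof (cases "card B = 1")
      case True then show ?thesis using ge by simp
    next
      case False
      then have "card B \<ge> 2" using Bne finB by (metis One_nat_def card_0_eq less_2_cases not_less)
      then obtain b2 where b2: "b2 \<in> B" "b2 \<noteq> b1"
        by (metis b1 card_le_Suc0_iff_eq finB not_less_eq_eq numeral_2_eq_2)
      show ?thesis
      proof (cases "int (card A) = Q")
        case True then show ?thesis using ge by simp
      next
        case False
        have "A \<noteq> {0..<Q}" using False Qpos by auto
        moreover have nd: "\<not> Q dvd (b2 - b1)"
        proof
          assume "Q dvd (b2 - b1)"
          then have "b2 mod Q = b1 mod Q" by (metis mod_eq_dvd_iff)
          moreover have "b1 mod Q = b1" "b2 mod Q = b2" using b1 b2 BQ by auto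
          ultimately show False using b2 by simp
        qed
        ultimately obtain a where a: "a \<in> A" "(a + (b2 - b1)) mod Q \<notin> A"
          using closure_full[OF Q AQ _ nd] Ane by blast
        define e where "e = a - b1"
        define A' where "A' = A \<union> (\<lambda>b. (b + e) mod Q) ` B"
        define B' where "B' = {b \<in> B. (b + e) mod Q \<in> A}"
        have b1B': "b1 \<in> B'" using a b1 AQ by (auto simp: B'_def e_def)
        have be: "b2 + e = a + (b2 - b1)" unfolding e_def by simp
        have b2B': "b2 \<notin> B'" using a(2) unfolding B'_def be[symmetric] by simp
        have B'B: "B' \<subseteq> B" by (auto simp: B'_def)
        have cB'lt: "card B' < card B" using b2 b2B' B'B finB by (intro psubset_card_mono) auto
        have A'Q: "A' \<subseteq> {0..<Q}" using AQ Qpos by (auto simp: A'_def)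
        have B'Q: "B' \<subseteq> {0..<Q}" using B'B BQ by auto
        have sub: "sumset Q A' B' \<subseteq> sumset Q A B"
        proof
          fix x assume "x \<in> sumset Q A' B'"
          then obtain x1 y where x1: "x1 \<in> A'" and y: "y \<in> B'" and x: "x = (x1 + y) mod Q"
            by (auto simp: sumset_iff)
          show "x \<in> sumset Q A B"
          proof (cases "x1 \<in> A")
            case True then show ?thesis using x y B'B by (auto simp: sumset_iff)
          next
            case False
            then obtain b where b: "b \<in> B" "x1 = (b + e) mod Q" using x1 by (auto simp: A'_def)
            have "x = ((y + e) mod Q + b) mod Q" using x b by (simp add: mod_add_left_eq mod_add_right_eq algebra_simps)
            moreover have "(y + e) mod Q \<in> A" using y by (auto simp: B'_def)
            ultimately show ?thesis using b by (auto simp: sumset_iff)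
          qed
        qed
        have cardA': "card A' = card A + (card B - card B')"
        proof -
          have "A' = A \<union> ((\<lambda>b. (b + e) mod Q) ` (B - B'))" by (auto simp: A'_def B'_def)
          moreover have "A \<inter> ((\<lambda>b. (b + e) mod Q) ` (B - B')) = {}" by (auto simp: B'_def)
          moreover have "card ((\<lambda>b. (b + e) mod Q) ` (B - B')) = card (B - B')"
            using BQ by (intro card_transl) auto
          moreover have "card (B - B') = card B - card B'" using B'B finB by (simp add: card_Diff_subset finite_subset)
          ultimately show ?thesis using finA finB by (simp add: card_Un_disjoint)
        qed
        have "min Q (int (card A') + int (card B') - 1) \<le> int (card (sumset Q A' B'))"
        proof -
          have A'ne: "A' \<noteq> {}" using Ane by (auto simp: A'_def)
          have B'ne: "B' \<noteq> {}" using b1B' by auto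
          show ?thesis using less.IH[OF cB'lt[unfolded cB], rule_format, OF refl A'Q B'Q A'ne B'ne] .
        qed
        moreover have "card (sumset Q A' B') \<le> card (sumset Q A B)"
          using sub sumset_finite[OF finA finB] by (rule card_mono[rotated])
        moreover have "int (card A') + int (card B') = int (card A) + int (card B)"
          using cardA' card_mono[OF finB B'B] by simp
        ultimately show ?thesis by linarith
      qed
    qed
  qed
qed

lemma cauchy_davenport:
  assumes "prime Q" "A \<subseteq> {0..<Q}" "B \<subseteq> {0..<Q}" "A \<noteq> {}" "B \<noteq> {}"
  shows "min Q (int (card A) + int (card B) - 1) \<le> int (card (sumset Q A B))"
  using cauchy_davenport_aux[OF assms(1)] assms(2-) by blast



fun ksum :: "int \<Rightarrow> nat \<Rightarrow> int set \<Rightarrow> int set" where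
  "ksum Q 0 A = {0}"
| "ksum Q (Suc k) A = sumset Q (ksum Q k A) A"

lemma ksum_sub: "Q > 0 \<Longrightarrow> ksum Q k A \<subseteq> {0..<Q}"
  by (cases k) (auto simp: sumset_sub)

lemma ksum_ne: "A \<noteq> {} \<Longrightarrow> ksum Q k A \<noteq> {}"
  by (induction k) (auto simp: sumset_def)

lemma ksum_card:
  fixes Q :: int
  assumes Q: "prime Q" and A: "A \<subseteq> {0..<Q}" "A \<noteq> {}"
  shows "min Q (int k * int (card A) - int k + 1) \<le> int (card (ksum Q k A))"
proof (induction k)
  case 0
  have "Q > 0" using Q prime_gt_0_int by blast
  then show ?case by simp
next
  case (Suc k)
  have Qpos: "Q > 0" using Q prime_gt_0_int by blast
  have c1: "int (card A) \<ge> 1" using A finite_subset[OF A(1)] by (simp add: Suc_leI card_gt_0_iff)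
  have "min Q (int (card (ksum Q k A)) + int (card A) - 1) \<le> int (card (ksum Q (Suc k) A))"
    using cauchy_davenport[OF Q ksum_sub[OF Qpos] A(1) ksum_ne[OF A(2)] A(2)] by simp
  moreover have "min Q (int (Suc k) * int (card A) - int (Suc k) + 1) \<le> min Q (int (card (ksum Q k A)) + int (card A) - 1)"
  proof -
    have h: "Q \<le> int (card (ksum Q k A)) \<or> int k * int (card A) - int k + 1 \<le> int (card (ksum Q k A))"
      using Suc.IH by (simp add: min_le_iff_disj)
    have e: "int (Suc k) * int (card A) - int (Suc k) + 1 = int k * int (card A) - int k + 1 + int (card A) - 1"
      by (simp add: algebra_simps)
    show ?thesis unfolding e using h c1 by (auto simp: min_def)
  qed
  ultimately show ?case by linarith
qed

definition Nrm :: "int \<Rightarrow> (nat \<Rightarrow> int) \<Rightarrow> nat set \<Rightarrow> int \<Rightarrow> real" where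
  "Nrm Q b I r = L2_set (\<lambda>j. real_of_int (dQ Q (r * b j))) I"

definition Lv :: "int \<Rightarrow> (nat \<Rightarrow> int) \<Rightarrow> nat set \<Rightarrow> real \<Rightarrow> int set" where
  "Lv Q b I t = {r \<in> {0..<Q}. Nrm Q b I r \<le> t}"

lemma Nrm_nonneg: "Nrm Q b I r \<ge> 0"
  unfolding Nrm_def by (rule L2_set_nonneg)

lemma Nrm_zero: "Q \<ge> 0 \<Longrightarrow> Nrm Q b I 0 = 0"
  unfolding Nrm_def by (simp add: dQ_zero L2_set_def)

lemma Nrm_add:
  assumes "Q > 0"
  shows "Nrm Q b I ((r + s) mod Q) \<le> Nrm Q b I r + Nrm Q b I s"
proof -
  have "dQ Q ((r + s) mod Q * b j) = dQ Q (r * b j + s * b j)" for j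
  proof -
    have "((r + s) mod Q * b j) mod Q = (r * b j + s * b j) mod Q"
      by (metis distrib_right mod_mult_left_eq)
    then show ?thesis by (metis dQ_mod)
  qed
  then have "Nrm Q b I ((r + s) mod Q) = L2_set (\<lambda>j. real_of_int (dQ Q (r * b j + s * b j))) I"
    unfolding Nrm_def by simp
  also have "\<dots> \<le> L2_set (\<lambda>j. real_of_int (dQ Q (r * b j)) + real_of_int (dQ Q (s * b j))) I"
  proof (rule L2_set_mono)
    fix j
    show "real_of_int (dQ Q (r * b j + s * b j)) \<le> real_of_int (dQ Q (r * b j)) + real_of_int (dQ Q (s * b j))"
      using dQ_triangle[OF assms, of "r * b j" "s * b j"] by (simp only: of_int_add[symmetric] of_int_le_iff)
    show "0 \<le> real_of_int (dQ Q (r * b j + s * b j))" using dQ_nonneg[OF assms] by simp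
  qed
  also have "\<dots> \<le> Nrm Q b I r + Nrm Q b I s"
    unfolding Nrm_def by (rule L2_set_triangle_ineq)
  finally show ?thesis .
qed

lemma ksum_Lv:
  assumes Q: "Q > 0" and t: "t \<ge> 0"
  shows "x \<in> ksum Q k (Lv Q b I t) \<Longrightarrow> Nrm Q b I x \<le> real k * t"
proof (induction k arbitrary: x)
  case 0 then show ?case using Q by (simp add: Nrm_zero)
next
  case (Suc k)
  then obtain y a where y: "y \<in> ksum Q k (Lv Q b I t)" and a: "a \<in> Lv Q b I t" and x: "x = (y + a) mod Q"
    by (auto simp: sumset_iff)
  have "Nrm Q b I x \<le> Nrm Q b I y + Nrm Q b I a" unfolding x by (rule Nrm_add[OF Q])
  also have "\<dots> \<le> real k * t + t" using Suc.IH[OF y] a by (auto simp: Lv_def)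
  finally show ?case by (simp add: algebra_simps)
qed

lemma Lv_bound:
  fixes Q :: int
  assumes Q: "prime Q" and t: "0 < t" "t \<le> t0" and M: "real (card (Lv Q b I t0)) \<le> M" "M < Q"
  shows "real (card (Lv Q b I t)) \<le> 2 * M * t / t0 + 1"
proof -
  have Qpos: "Q > 0" using Q prime_gt_0_int by blast
  define k where "k = nat \<lfloor>t0 / t\<rfloor>"
  have y1: "t0 / t \<ge> 1" using t by simp
  have k1: "k \<ge> 1" using y1 by (simp add: k_def le_nat_floor)
  have kle: "real k \<le> t0 / t" using y1 by (simp add: k_def)
  have kge: "real k \<ge> t0 / t / 2"
  proof -
    have "real k = of_int \<lfloor>t0 / t\<rfloor>" using y1 by (simp add: k_def)
    moreover have "of_int \<lfloor>t0 / t\<rfloor> > t0 / t - 1" by linarith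
    moreover have "real k \<ge> 1" using k1 by simp
    moreover have "\<And>y (kk::real) f. kk = f \<Longrightarrow> y - 1 < f \<Longrightarrow> 1 \<le> kk \<Longrightarrow> y/2 \<le> kk" by linarith
    ultimately show ?thesis by blast
  qed
  have kt: "real k * t \<le> t0" using kle t by (simp add: field_simps)
  have sub: "ksum Q k (Lv Q b I t) \<subseteq> Lv Q b I t0"
  proof
    fix x assume x: "x \<in> ksum Q k (Lv Q b I t)"
    have "Nrm Q b I x \<le> real k * t" using ksum_Lv[OF Qpos _ x] t by simp
    moreover have "x \<in> {0..<Q}" using ksum_sub[OF Qpos] x by blast
    ultimately show "x \<in> Lv Q b I t0" using kt unfolding Lv_def by auto
  qed
  have fin: "finite (Lv Q b I t0)" unfolding Lv_def by (rule finite_subset[of _ "{0..<Q}"]) auto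
  have "card (ksum Q k (Lv Q b I t)) \<le> card (Lv Q b I t0)" by (rule card_mono[OF fin sub])
  moreover have ne: "Lv Q b I t \<noteq> {}"
    using Qpos t by (auto simp: Lv_def Nrm_zero intro!: exI[of _ 0])
  have "min Q (int k * int (card (Lv Q b I t)) - int k + 1) \<le> int (card (ksum Q k (Lv Q b I t)))"
    by (rule ksum_card[OF Q _ ne]) (auto simp: Lv_def)
  ultimately have "min Q (int k * int (card (Lv Q b I t)) - int k + 1) \<le> int (card (Lv Q b I t0))"
    by linarith
  then have "real_of_int (min Q (int k * int (card (Lv Q b I t)) - int k + 1)) \<le> M"
    using M(1) by (metis of_int_le_iff of_int_of_nat_eq order_trans)
  then have "real k * real (card (Lv Q b I t)) - real k + 1 \<le> M"
    using M(2) by (auto simp: min_def split: if_splits)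
  then have "real (card (Lv Q b I t)) \<le> (M + real k - 1) / real k"
    using k1 by (simp add: field_simps)
  also have "\<dots> \<le> M / real k + 1" using k1 by (simp add: field_simps)
  also have "M / real k \<le> 2 * M * t / t0"
  proof -
    have M0: "M \<ge> 0" using M(1) by (meson of_nat_0_le_iff order_trans)
    have kp: "real k > 0" using k1 by simp
    have yp: "t0 / t / 2 > 0" using y1 by simp
    have "M / real k \<le> M / (t0 / t / 2)"
      by (rule divide_left_mono[OF kge M0 mult_pos_pos[OF kp yp]])
    also have "\<dots> = 2 * M * t / t0" using t by (simp add: field_simps)
    finally show ?thesis .
  qed
  finally show ?thesis by simp
qed



definition om :: "int \<Rightarrow> int \<Rightarrow> complex" where
  "om Q z = cis (2 * pi * real_of_int z / real_of_int Q)"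

lemma om_add: "om Q (z + w) = om Q z * om Q w"
  unfolding om_def cis_mult by (simp add: add_divide_distrib distrib_left)

lemma om_zero: "om Q 0 = 1" unfolding om_def by simp

lemma om_sum: "finite A \<Longrightarrow> om Q (\<Sum>j\<in>A. f j) = (\<Prod>j\<in>A. om Q (f j))"
  by (induction A rule: finite_induct) (simp_all add: om_zero om_add)

lemma norm_om [simp]: "norm (om Q z) = 1" unfolding om_def by simp

lemma cnj_om: "cnj (om Q z) = om Q (- z)" unfolding om_def cis_cnj by simp

lemma Re_om: "Re (om Q z) = cos (2 * pi * real_of_int z / real_of_int Q)" unfolding om_def by simp
lemma Im_om: "Im (om Q z) = sin (2 * pi * real_of_int z / real_of_int Q)" unfolding om_def by simp

lemma om_pow: "om Q (int n * z) = om Q z ^ n"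
proof -
  have "om Q z ^ n = cis (real n * (2 * pi * real_of_int z / real_of_int Q))"
    unfolding om_def by (rule Complex.DeMoivre)
  then show ?thesis unfolding om_def by (simp add: algebra_simps)
qed

lemma om_eq_1_iff:
  assumes "Q > 0" shows "om Q z = 1 \<longleftrightarrow> Q dvd z"
proof
  assume "Q dvd z"
  then obtain k where k: "z = Q * k" by auto
  have "2 * pi * real_of_int z / real_of_int Q = 2 * pi * real_of_int k" using assms by (simp add: k)
  then show "om Q z = 1" unfolding om_def by simp
next
  assume "om Q z = 1"
  then have "cos (2 * pi * real_of_int z / real_of_int Q) = 1" using Re_om[of Q z] by simp
  then obtain n :: int where n: "2 * pi * real_of_int z / real_of_int Q = of_int n * 2 * pi" using cos_one_2pi_int by blast
  then have "real_of_int z = real_of_int (n * Q)" using assms by (simp add: field_simps)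
  then have "z = n * Q" using of_int_eq_iff by blast
  then show "Q dvd z" by simp
qed

lemma sum_int_range: "(\<Sum>r\<in>{0..<Q}. g r) = (\<Sum>i<nat Q. g (int i))" if "Q \<ge> 0" for Q :: int
proof -
  have "{0..<Q} = int ` {0..<nat Q}" using that by (simp add: image_int_atLeastLessThan)
  then show ?thesis by (simp add: sum.reindex lessThan_atLeast0)
qed

lemma om_orth:
  assumes Q: "Q > 0"
  shows "(\<Sum>r\<in>{0..<Q}. om Q (r * z)) = (if Q dvd z then of_int Q else 0)"
proof -
  have "(\<Sum>r\<in>{0..<Q}. om Q (r * z)) = (\<Sum>i<nat Q. om Q z ^ i)"
    using Q by (simp add: sum_int_range om_pow)
  also have "\<dots> = (if Q dvd z then of_int Q else 0)"
  proof (cases "Q dvd z")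
    case True
    then have "om Q z = 1" using om_eq_1_iff[OF Q] by simp
    then show ?thesis using True Q by simp
  next
    case False
    then have ne: "om Q z \<noteq> 1" using om_eq_1_iff[OF Q] by simp
    have "om Q z ^ nat Q = om Q (int (nat Q) * z)" by (rule om_pow[symmetric])
    also have "\<dots> = om Q (Q * z)" using Q by simp
    also have "\<dots> = 1" using Q by (simp add: om_eq_1_iff)
    finally have "om Q z ^ nat Q = 1" .
    then show ?thesis using False ne by (simp add: geometric_sum)
  qed
  finally show ?thesis .
qed

lemma fourier_count:
  fixes Q :: int and I :: "nat set" and a :: "nat \<Rightarrow> int" and p :: "int \<Rightarrow> real" and V :: "int set"
  assumes Q: "Q > 0" and fin: "finite I" "finite V"
    and range: "\<And>x. x \<in> PiE I (\<lambda>_. V) \<Longrightarrow> (Q dvd ((\<Sum>j\<in>I. x j * a j) - m) \<longleftrightarrow> (\<Sum>j\<in>I. x j * a j) = m)"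
  shows "of_int Q * complex_of_real (\<Sum>x\<in>{x\<in>PiE I (\<lambda>_. V). (\<Sum>j\<in>I. x j * a j) = m}. \<Prod>j\<in>I. p (x j))
    = (\<Sum>r\<in>{0..<Q}. om Q (- (r * m)) * (\<Prod>j\<in>I. \<Sum>v\<in>V. complex_of_real (p v) * om Q (r * v * a j)))"
proof -
  let ?X = "PiE I (\<lambda>_. V)"
  have finX: "finite ?X" using fin by (simp add: finite_PiE)
  have step1: "(\<Prod>j\<in>I. \<Sum>v\<in>V. complex_of_real (p v) * om Q (r * v * a j))
      = (\<Sum>x\<in>?X. complex_of_real (\<Prod>j\<in>I. p (x j)) * om Q (r * (\<Sum>j\<in>I. x j * a j)))" for r
  proof -
    have "(\<Prod>j\<in>I. \<Sum>v\<in>V. complex_of_real (p v) * om Q (r * v * a j))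
        = (\<Sum>x\<in>?X. \<Prod>j\<in>I. complex_of_real (p (x j)) * om Q (r * x j * a j))"
      using fin by (rule prod_sum_PiE)
    also have "\<dots> = (\<Sum>x\<in>?X. complex_of_real (\<Prod>j\<in>I. p (x j)) * om Q (r * (\<Sum>j\<in>I. x j * a j)))"
    proof (rule sum.cong[OF refl])
      fix x assume "x \<in> ?X"
      have "om Q (r * (\<Sum>j\<in>I. x j * a j)) = (\<Prod>j\<in>I. om Q (r * x j * a j))"
        using fin by (simp add: sum_distrib_left om_sum mult.assoc)
      then show "(\<Prod>j\<in>I. complex_of_real (p (x j)) * om Q (r * x j * a j))
          = complex_of_real (\<Prod>j\<in>I. p (x j)) * om Q (r * (\<Sum>j\<in>I. x j * a j))"
        by (simp add: prod.distrib)
    qed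
    finally show ?thesis .
  qed
  have "(\<Sum>r\<in>{0..<Q}. om Q (- (r * m)) * (\<Prod>j\<in>I. \<Sum>v\<in>V. complex_of_real (p v) * om Q (r * v * a j)))
      = (\<Sum>r\<in>{0..<Q}. \<Sum>x\<in>?X. complex_of_real (\<Prod>j\<in>I. p (x j)) * om Q (r * ((\<Sum>j\<in>I. x j * a j) - m)))"
  proof (rule sum.cong[OF refl])
    fix r
    have "om Q (- (r * m)) * (\<Sum>x\<in>?X. complex_of_real (\<Prod>j\<in>I. p (x j)) * om Q (r * (\<Sum>j\<in>I. x j * a j)))
       = (\<Sum>x\<in>?X. complex_of_real (\<Prod>j\<in>I. p (x j)) * (om Q (r * (\<Sum>j\<in>I. x j * a j)) * om Q (- (r * m))))"
      by (simp add: sum_distrib_left algebra_simps)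
    also have "\<dots> = (\<Sum>x\<in>?X. complex_of_real (\<Prod>j\<in>I. p (x j)) * om Q (r * ((\<Sum>j\<in>I. x j * a j) - m)))"
      by (simp add: om_add[symmetric] algebra_simps)
    finally show "om Q (- (r * m)) * (\<Prod>j\<in>I. \<Sum>v\<in>V. complex_of_real (p v) * om Q (r * v * a j))
       = (\<Sum>x\<in>?X. complex_of_real (\<Prod>j\<in>I. p (x j)) * om Q (r * ((\<Sum>j\<in>I. x j * a j) - m)))"
      by (simp add: step1)
  qed
  also have "\<dots> = (\<Sum>x\<in>?X. complex_of_real (\<Prod>j\<in>I. p (x j)) * (\<Sum>r\<in>{0..<Q}. om Q (r * ((\<Sum>j\<in>I. x j * a j) - m))))"
    by (simp add: sum.swap[of _ "{0..<Q}"] sum_distrib_left)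
  also have "\<dots> = (\<Sum>x\<in>?X. if (\<Sum>j\<in>I. x j * a j) = m then of_int Q * complex_of_real (\<Prod>j\<in>I. p (x j)) else 0)"
  proof (rule sum.cong[OF refl])
    fix x assume x: "x \<in> ?X"
    show "complex_of_real (\<Prod>j\<in>I. p (x j)) * (\<Sum>r\<in>{0..<Q}. om Q (r * ((\<Sum>j\<in>I. x j * a j) - m)))
      = (if (\<Sum>j\<in>I. x j * a j) = m then of_int Q * complex_of_real (\<Prod>j\<in>I. p (x j)) else 0)"
      unfolding om_orth[OF Q] using range[OF x] by auto
  qed
  also have "\<dots> = of_int Q * complex_of_real (\<Sum>x\<in>{x\<in>?X. (\<Sum>j\<in>I. x j * a j) = m}. \<Prod>j\<in>I. p (x j))"
    using finX by (simp add: sum.inter_filter[symmetric] sum_distrib_left)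
  finally show ?thesis by simp
qed



lemma sin_ge_third:
  fixes x :: real assumes "0 \<le> x" "x \<le> 2" shows "sin x \<ge> x / 3"
proof -
  have b: "\<bar>sin x - (\<Sum>m<3. sin_coeff m * x ^ m)\<bar> \<le> inverse (fact 3) * \<bar>x\<bar> ^ 3"
    by (rule Maclaurin_sin_bound)
  have s: "(\<Sum>m<3. sin_coeff m * x ^ m) = x"
  proof -
    have "(\<Sum>m<(3::nat). sin_coeff m * x ^ m) = sin_coeff 0 * x^0 + sin_coeff 1 * x^1 + sin_coeff 2 * x^2"
      by (simp add: eval_nat_numeral)
    also have "\<dots> = x" by (simp add: sin_coeff_def)
    finally show ?thesis .
  qed
  have f: "inverse (fact 3) * \<bar>x\<bar> ^ 3 = x ^ 3 / 6"
  proof -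
    have "(fact 3 :: real) = 6" by (simp add: eval_nat_numeral)
    moreover have "\<bar>x\<bar> = x" using assms by simp
    ultimately show ?thesis by (simp only:) (simp add: field_simps)
  qed
  have "\<bar>sin x - x\<bar> \<le> x ^ 3 / 6" using b unfolding s f .
  moreover have "- \<bar>sin x - x\<bar> \<le> sin x - x" by (cases "sin x - x \<ge> 0") auto
  ultimately have "sin x \<ge> x - x ^ 3 / 6" by linarith
  moreover have "x ^ 3 \<le> 4 * x"
  proof -
    have xx: "x * x \<le> 2 * 2" by (rule mult_mono) (use assms in auto)
    have "x ^ 3 = x * (x * x)" by (simp add: power3_eq_cube)
    also have "\<dots> \<le> x * 4" using xx assms(1) by (intro mult_left_mono) auto
    finally show ?thesis by simp
  qed
  ultimately show ?thesis by linarith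
qed

lemma one_minus_cos_ge:
  fixes Q z :: int assumes Q: "Q > 0"
  shows "1 - cos (2 * pi * real_of_int z / real_of_int Q) \<ge> 2 * real_of_int (dQ Q z) ^ 2 / real_of_int Q ^ 2"
proof -
  define d where "d = real_of_int (dQ Q z)"
  have d0: "0 \<le> d" using dQ_nonneg[OF Q] by (simp add: d_def)
  have dh: "2 * d \<le> real_of_int Q" using dQ_le_half[OF Q, of z] by (simp add: d_def)
  define x where "x = pi * d / real_of_int Q"
  have x0: "0 \<le> x" using d0 Q by (simp add: x_def)
  have x2: "x \<le> 2"
  proof -
    have "x \<le> pi / 2" using dh Q by (simp add: x_def field_simps)
    then show ?thesis using pi_less_4 by linarith
  qed
  have "cos (2 * pi * real_of_int z / real_of_int Q) = cos (2 * pi * d / real_of_int Q)"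
    unfolding d_def by (rule dQ_cos[OF Q])
  also have "\<dots> = cos (2 * x)" by (simp add: x_def mult.assoc)
  also have "\<dots> = 1 - 2 * (sin x)\<^sup>2" by (rule cos_double_sin)
  finally have c: "1 - cos (2 * pi * real_of_int z / real_of_int Q) = 2 * (sin x)\<^sup>2" by simp
  have "(x / 3)\<^sup>2 \<le> (sin x)\<^sup>2" using sin_ge_third[OF x0 x2] x0 by (intro power_mono) auto
  moreover have "(x / 3)\<^sup>2 = pi\<^sup>2 * d\<^sup>2 / (9 * real_of_int Q ^ 2)" by (simp add: x_def power_divide power_mult_distrib)
  moreover have "pi\<^sup>2 * d\<^sup>2 / (9 * real_of_int Q ^ 2) \<ge> d\<^sup>2 / real_of_int Q ^ 2"
  proof -
    have "3 * 3 \<le> pi * pi" using pi_gt3 by (intro mult_mono) auto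
    then have "pi\<^sup>2 \<ge> 9" by (simp add: power2_eq_square)
    then show ?thesis using Q by (simp add: field_simps mult_right_mono)
  qed
  ultimately show ?thesis unfolding c d_def by linarith
qed



lemma phi_norm_sq:
  fixes p :: "int \<Rightarrow> real" and Q z :: int
  defines "c \<equiv> cos (2 * pi * real_of_int z / real_of_int Q)"
  assumes sum1: "p (-1) + p 0 + p 1 = 1"
  shows "(norm (\<Sum>v\<in>{-1,0,1::int}. complex_of_real (p v) * om Q (v * z))) ^ 2
     = 1 - 2 * p 0 * (p 1 + p (-1)) * (1 - c) - 4 * p 1 * p (-1) * (1 - c ^ 2)"
proof -
  define s where "s = sin (2 * pi * real_of_int z / real_of_int Q)"
  let ?S = "\<Sum>v\<in>{-1,0,1::int}. complex_of_real (p v) * om Q (v * z)"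
  have S: "?S = complex_of_real (p (-1)) * om Q (- z) + complex_of_real (p 0) + complex_of_real (p 1) * om Q z"
    by (simp add: om_zero)
  have Re: "Re ?S = p 0 + (p 1 + p (-1)) * c"
    unfolding S by (simp add: Re_om c_def algebra_simps)
  have Im: "Im ?S = (p 1 - p (-1)) * s"
    unfolding S by (simp add: Im_om s_def algebra_simps)
  have sc: "s ^ 2 = 1 - c ^ 2" unfolding s_def c_def by (rule sin_squared_eq)
  have p0: "p 0 = 1 - p 1 - p (-1)" using sum1 by simp
  have "(norm ?S) ^ 2 = (p 0 + (p 1 + p (-1)) * c) ^ 2 + ((p 1 - p (-1)) * s) ^ 2"
    unfolding cmod_power2 Re Im ..
  also have "\<dots> = (p 0 + (p 1 + p (-1)) * c) ^ 2 + (p 1 - p (-1)) ^ 2 * (1 - c ^ 2)"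
    by (simp add: power_mult_distrib sc)
  also have "\<dots> = 1 - 2 * p 0 * (p 1 + p (-1)) * (1 - c) - 4 * p 1 * p (-1) * (1 - c ^ 2)"
  proof -
    have gen: "(a0 + (a1 + am) * c) ^ 2 + (a1 - am) ^ 2 * (1 - c ^ 2) = 1 - 2 * a0 * (a1 + am) * (1 - c) - 4 * a1 * am * (1 - (c::real) ^ 2)"
      if "a0 = 1 - a1 - am" for a0 a1 am
      using that by algebra
    show ?thesis by (rule gen[OF p0])
  qed
  finally show ?thesis .
qed

lemma sq_le_exp_imp:
  fixes y r :: real assumes "r \<ge> 0" "r ^ 2 \<le> 1 - y" shows "r \<le> exp (- y / 2)"
proof -
  have "1 - y \<le> exp (- y)" using exp_ge_add_one_self[of "-y"] by simp
  also have "exp (- y) = exp (- y / 2) * exp (- y / 2)" by (simp add: exp_add[symmetric])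
  also have "\<dots> = (exp (- y / 2)) ^ 2" by (simp add: power2_eq_square)
  finally have "r ^ 2 \<le> (exp (- y / 2)) ^ 2" using assms(2) by linarith
  then show ?thesis by (rule power2_le_imp_le) simp
qed

lemma phi_bound:
  fixes p :: "int \<Rightarrow> real"
  assumes nn: "\<And>v. p v \<ge> 0" and sum1: "p (-1) + p 0 + p 1 = 1"
    and lt: "p (-1) < 1" "p 0 < 1" "p 1 < 1"
  shows "\<exists>\<kappa>>0. \<exists>h\<in>{1,2::int}. \<forall>Q>0. \<forall>z.
     norm (\<Sum>v\<in>{-1,0,1::int}. complex_of_real (p v) * om Q (v * z))
       \<le> exp (- \<kappa> * real_of_int (dQ Q (h * z)) ^ 2 / real_of_int Q ^ 2)"
proof (cases "p 0 > 0")
  case True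
  define S where "S = p 1 + p (-1)"
  have S: "S > 0" using sum1 lt(2) by (simp add: S_def)
  show ?thesis
  proof (intro exI[of _ "2 * p 0 * S"] conjI bexI[of _ 1] allI impI)
    show "0 < 2 * p 0 * S" using True S by simp
    fix Q z :: int assume Q: "Q > 0"
    define c where "c = cos (2 * pi * real_of_int z / real_of_int Q)"
    define D where "D = real_of_int (dQ Q (1 * z)) ^ 2 / real_of_int Q ^ 2"
    have c1: "1 - c \<ge> 2 * D" using one_minus_cos_ge[OF Q, of z] by (simp add: c_def D_def)
    have cc: "1 - c ^ 2 \<ge> 0"
    proof -
      have "0 \<le> (sin (2 * pi * real_of_int z / real_of_int Q)) ^ 2" by simp
      then show ?thesis using sin_squared_eq[of "2 * pi * real_of_int z / real_of_int Q"] unfolding c_def by linarith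
    qed
    have pp: "p 1 * p (-1) \<ge> 0" using nn by simp
    have "(norm (\<Sum>v\<in>{-1,0,1::int}. complex_of_real (p v) * om Q (v * z))) ^ 2
        = 1 - 2 * p 0 * S * (1 - c) - 4 * (p 1 * p (-1)) * (1 - c ^ 2)"
      using phi_norm_sq[OF sum1, of Q z] by (simp add: c_def S_def mult.assoc)
    also have "\<dots> \<le> 1 - 2 * p 0 * S * (1 - c)" using mult_nonneg_nonneg[OF pp cc] by simp
    also have "\<dots> \<le> 1 - 2 * p 0 * S * (2 * D)"
      using c1 True S by (intro diff_left_mono mult_left_mono) auto
    finally have n2: "(norm (\<Sum>v\<in>{-1,0,1::int}. complex_of_real (p v) * om Q (v * z))) ^ 2 \<le> 1 - 2 * p 0 * S * (2 * D)" .
    have "norm (\<Sum>v\<in>{-1,0,1::int}. complex_of_real (p v) * om Q (v * z)) \<le> exp (- (2 * p 0 * S * (2 * D)) / 2)"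
      by (rule sq_le_exp_imp[OF norm_ge_zero n2])
    moreover have "- (2 * p 0 * S * (2 * D)) / 2 = - (2 * p 0 * S) * real_of_int (dQ Q (1 * z)) ^ 2 / real_of_int Q ^ 2"
      by (simp add: D_def)
    ultimately show "norm (\<Sum>v\<in>{-1,0,1::int}. complex_of_real (p v) * om Q (v * z))
       \<le> exp (- (2 * p 0 * S) * real_of_int (dQ Q (1 * z)) ^ 2 / real_of_int Q ^ 2)" by simp
  qed simp
next
  case False
  then have p0: "p 0 = 0" using nn[of 0] by simp
  have pos: "p 1 > 0" "p (-1) > 0" using sum1 lt p0 by auto
  show ?thesis
  proof (intro exI[of _ "2 * p 1 * p (-1)"] conjI bexI[of _ 2] allI impI)
    show "0 < 2 * p 1 * p (-1)" using pos by simp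
    fix Q z :: int assume Q: "Q > 0"
    define c where "c = cos (2 * pi * real_of_int z / real_of_int Q)"
    define D where "D = real_of_int (dQ Q (2 * z)) ^ 2 / real_of_int Q ^ 2"
    have c2: "cos (2 * pi * real_of_int (2 * z) / real_of_int Q) = 1 - 2 * (sin (2 * pi * real_of_int z / real_of_int Q)) ^ 2"
    proof -
      have "2 * pi * real_of_int (2 * z) / real_of_int Q = 2 * (2 * pi * real_of_int z / real_of_int Q)" by simp
      then show ?thesis by (simp only: cos_double_sin)
    qed
    have "1 - c ^ 2 = (sin (2 * pi * real_of_int z / real_of_int Q)) ^ 2" unfolding c_def by (simp add: sin_squared_eq)
    also have "\<dots> \<ge> D" using one_minus_cos_ge[OF Q, of "2 * z"] c2 by (simp add: D_def)
    finally have c1: "1 - c ^ 2 \<ge> D" .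
    have "(norm (\<Sum>v\<in>{-1,0,1::int}. complex_of_real (p v) * om Q (v * z))) ^ 2
        = 1 - 4 * p 1 * p (-1) * (1 - c ^ 2)"
      using phi_norm_sq[OF sum1, of Q z] p0 by (simp add: c_def)
    also have "\<dots> \<le> 1 - 4 * p 1 * p (-1) * D"
      using c1 pos by (intro diff_left_mono mult_left_mono) auto
    finally have n2: "(norm (\<Sum>v\<in>{-1,0,1::int}. complex_of_real (p v) * om Q (v * z))) ^ 2 \<le> 1 - 4 * p 1 * p (-1) * D" .
    have "norm (\<Sum>v\<in>{-1,0,1::int}. complex_of_real (p v) * om Q (v * z)) \<le> exp (- (4 * p 1 * p (-1) * D) / 2)"
      by (rule sq_le_exp_imp[OF norm_ge_zero n2])
    moreover have "- (4 * p 1 * p (-1) * D) / 2 = - (2 * p 1 * p (-1)) * real_of_int (dQ Q (2 * z)) ^ 2 / real_of_int Q ^ 2"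
      by (simp add: D_def)
    ultimately show "norm (\<Sum>v\<in>{-1,0,1::int}. complex_of_real (p v) * om Q (v * z))
       \<le> exp (- (2 * p 1 * p (-1)) * real_of_int (dQ Q (2 * z)) ^ 2 / real_of_int Q ^ 2)" by simp
  qed simp
qed



lemma parseval:
  fixes Q :: int and b :: "nat \<Rightarrow> int"
  assumes Q: "Q > 0" and fin: "finite I" and inj: "inj_on (\<lambda>j. b j mod Q) I"
  shows "(\<Sum>r\<in>{0..<Q}. (norm (\<Sum>j\<in>I. om Q (r * b j)))\<^sup>2) = real_of_int Q * real (card I)"
proof -
  have "complex_of_real (\<Sum>r\<in>{0..<Q}. (norm (\<Sum>j\<in>I. om Q (r * b j)))\<^sup>2)
      = (\<Sum>r\<in>{0..<Q}. (\<Sum>i\<in>I. om Q (r * b i)) * cnj (\<Sum>j\<in>I. om Q (r * b j)))"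
    by (simp only: of_real_sum complex_norm_square)
  also have "\<dots> = (\<Sum>r\<in>{0..<Q}. \<Sum>i\<in>I. \<Sum>j\<in>I. om Q (r * (b i - b j)))"
  proof (rule sum.cong[OF refl])
    fix r
    show "(\<Sum>i\<in>I. om Q (r * b i)) * cnj (\<Sum>j\<in>I. om Q (r * b j)) = (\<Sum>i\<in>I. \<Sum>j\<in>I. om Q (r * (b i - b j)))"
    proof -
      have e: "om Q (r * b i) * cnj (om Q (r * b j)) = om Q (r * (b i - b j))" for i j
        by (simp add: cnj_om om_add[symmetric] right_diff_distrib)
      have "(\<Sum>i\<in>I. om Q (r * b i)) * cnj (\<Sum>j\<in>I. om Q (r * b j))
          = (\<Sum>i\<in>I. om Q (r * b i)) * (\<Sum>j\<in>I. cnj (om Q (r * b j)))" by simp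
      also have "\<dots> = (\<Sum>i\<in>I. \<Sum>j\<in>I. om Q (r * b i) * cnj (om Q (r * b j)))" by (rule sum_product)
      finally show ?thesis by (simp only: e)
    qed
  qed
  also have "\<dots> = (\<Sum>i\<in>I. \<Sum>j\<in>I. \<Sum>r\<in>{0..<Q}. om Q (r * (b i - b j)))"
    by (simp add: sum.swap[of _ "{0..<Q}"])
  also have "\<dots> = (\<Sum>i\<in>I. \<Sum>j\<in>I. if j = i then complex_of_int Q else 0)"
  proof (intro sum.cong refl)
    fix i j assume i: "i \<in> I" and j: "j \<in> I"
    have "Q dvd (b i - b j) \<longleftrightarrow> b i mod Q = b j mod Q" by (simp add: mod_eq_dvd_iff)
    also have "\<dots> \<longleftrightarrow> j = i" using inj i j unfolding inj_on_def by blast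
    finally show "(\<Sum>r\<in>{0..<Q}. om Q (r * (b i - b j))) = (if j = i then complex_of_int Q else 0)"
      by (simp add: om_orth[OF Q])
  qed
  also have "\<dots> = complex_of_real (real_of_int Q * real (card I))"
    using fin by simp
  finally show ?thesis by (simp only: of_real_eq_iff)
qed

lemma cos_ge_quad: fixes y :: real shows "cos y \<ge> 1 - y\<^sup>2 / 2"
proof -
  have "cos y = cos (2 * (y / 2))" by simp
  also have "\<dots> = 1 - 2 * (sin (y / 2))\<^sup>2" by (rule cos_double_sin)
  finally have c: "cos y = 1 - 2 * (sin (y / 2))\<^sup>2" .
  have "(sin (y / 2))\<^sup>2 \<le> (y / 2)\<^sup>2"
  proof -
    have "\<bar>sin (y / 2)\<bar> ^ 2 \<le> \<bar>y / 2\<bar> ^ 2" by (rule power_mono[OF abs_sin_x_le_abs_x abs_ge_zero])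
    then show ?thesis by (simp only: power2_abs)
  qed
  then show ?thesis unfolding c by (simp add: power_divide)
qed

lemma Nrm_sq: "(Nrm Q b I r)\<^sup>2 = (\<Sum>j\<in>I. (real_of_int (dQ Q (r * b j)))\<^sup>2)"
  unfolding Nrm_def L2_set_def by (simp add: sum_nonneg)

lemma Lv_small:
  fixes Q :: int and b :: "nat \<Rightarrow> int"
  assumes Q: "Q > 0" and fin: "finite I" and n: "card I \<ge> 1" and inj: "inj_on (\<lambda>j. b j mod Q) I"
  shows "real (card (Lv Q b I (real_of_int Q * sqrt (real (card I) / 40)))) \<le> 4 * real_of_int Q / real (card I)"
proof -
  define n where "n = real (card I)"
  have n1: "n \<ge> 1" using n by (simp add: n_def)
  define t0 where "t0 = real_of_int Q * sqrt (n / 40)"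
  define L where "L = Lv Q b I t0"
  let ?S = "\<lambda>r. \<Sum>j\<in>I. om Q (r * b j)"
  have big: "(norm (?S r))\<^sup>2 \<ge> n\<^sup>2 / 4" if r: "r \<in> L" for r
  proof -
    have Nr: "(Nrm Q b I r)\<^sup>2 \<le> t0\<^sup>2"
      using r Nrm_nonneg[of Q b I r] unfolding L_def Lv_def by (auto intro: power_mono)
    have t0sq: "t0\<^sup>2 = real_of_int Q ^ 2 * n / 40"
      unfolding t0_def using n1 by (simp add: power_mult_distrib)
    have "Re (?S r) = (\<Sum>j\<in>I. cos (2 * pi * real_of_int (dQ Q (r * b j)) / real_of_int Q))"
    proof -
      have "Re (?S r) = (\<Sum>j\<in>I. cos (2 * pi * real_of_int (r * b j) / real_of_int Q))"
        by (simp add: Re_om)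
      also have "\<dots> = (\<Sum>j\<in>I. cos (2 * pi * real_of_int (dQ Q (r * b j)) / real_of_int Q))"
        by (rule sum.cong[OF refl]) (rule dQ_cos[OF Q])
      finally show ?thesis .
    qed
    also have "\<dots> \<ge> (\<Sum>j\<in>I. 1 - (2 * pi * real_of_int (dQ Q (r * b j)) / real_of_int Q)\<^sup>2 / 2)"
      by (intro sum_mono cos_ge_quad)
    also have "(\<Sum>j\<in>I. 1 - (2 * pi * real_of_int (dQ Q (r * b j)) / real_of_int Q)\<^sup>2 / 2)
        = n - 2 * pi\<^sup>2 * (Nrm Q b I r)\<^sup>2 / real_of_int Q ^ 2"
    proof -
      have e: "1 - (2 * pi * real_of_int (dQ Q (r * b j)) / real_of_int Q)\<^sup>2 / 2
          = 1 - (2 * pi\<^sup>2 / real_of_int Q ^ 2) * (real_of_int (dQ Q (r * b j)))\<^sup>2" for j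
        by (simp add: power_divide power_mult_distrib)
      have "(\<Sum>j\<in>I. 1 - (2 * pi * real_of_int (dQ Q (r * b j)) / real_of_int Q)\<^sup>2 / 2)
          = (\<Sum>j\<in>I. 1 - (2 * pi\<^sup>2 / real_of_int Q ^ 2) * (real_of_int (dQ Q (r * b j)))\<^sup>2)"
        by (simp only: e)
      also have "\<dots> = n - (2 * pi\<^sup>2 / real_of_int Q ^ 2) * (Nrm Q b I r)\<^sup>2"
        unfolding Nrm_sq n_def by (simp add: sum_subtractf sum_distrib_left)
      finally show ?thesis by simp
    qed
    finally have Re1: "Re (?S r) \<ge> n - 2 * pi\<^sup>2 * (Nrm Q b I r)\<^sup>2 / real_of_int Q ^ 2" .
    have "2 * pi\<^sup>2 * (Nrm Q b I r)\<^sup>2 / real_of_int Q ^ 2 \<le> 2 * pi\<^sup>2 * t0\<^sup>2 / real_of_int Q ^ 2"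
      using Nr Q by (intro divide_right_mono mult_left_mono) auto
    also have "\<dots> = 2 * pi\<^sup>2 * n / 40" unfolding t0sq using Q by simp
    also have "\<dots> \<le> 2 * 10 * n / 40"
    proof -
      have "pi * pi \<le> 3.15 * 3.15" using pi_approx by (intro mult_mono) auto
      then have "pi\<^sup>2 \<le> 10" by (simp add: power2_eq_square)
      then show ?thesis using n1 by (intro divide_right_mono mult_right_mono) auto
    qed
    finally have "Re (?S r) \<ge> n / 2" using Re1 by simp
    moreover have "Re (?S r) \<le> norm (?S r)" by (rule complex_Re_le_cmod)
    ultimately have "(n / 2)\<^sup>2 \<le> (norm (?S r))\<^sup>2" using n1 by (intro power_mono) auto
    then show ?thesis by (simp add: power_divide)
  qed
  have finL: "finite L" unfolding L_def Lv_def by (rule finite_subset[of _ "{0..<Q}"]) auto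
  have "real (card L) * (n\<^sup>2 / 4) = (\<Sum>r\<in>L. n\<^sup>2 / 4)" by simp
  also have "\<dots> \<le> (\<Sum>r\<in>L. (norm (?S r))\<^sup>2)" by (intro sum_mono big)
  also have "\<dots> \<le> (\<Sum>r\<in>{0..<Q}. (norm (?S r))\<^sup>2)"
    by (intro sum_mono2) (auto simp: L_def Lv_def)
  also have "\<dots> = real_of_int Q * n" unfolding n_def by (rule parseval[OF Q fin inj])
  finally have "real (card L) * (n\<^sup>2 / 4) \<le> real_of_int Q * n" .
  then have "real (card L) \<le> 4 * real_of_int Q / n" using n1 by (simp add: field_simps power2_eq_square)
  then show ?thesis by (simp add: L_def t0_def n_def)
qed



lemma sum_half_geom: "(\<Sum>l<K. (1/2::real) ^ l) \<le> 2"
proof -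
  have "(\<Sum>l<K. (1/2::real) ^ l) = 2 - 2 * (1/2) ^ K"
    by (induction K) (simp_all add: field_simps)
  then show ?thesis by simp
qed

lemma sum_half_lin_eq: "(\<Sum>l<K. (real l + 1) * (1/2::real) ^ l) = 4 - (2 * real K + 4) * (1/2) ^ K"
proof (induction K)
  case 0 then show ?case by simp
next
  case (Suc K)
  have e: "(1/2::real)^(Suc K) = (1/2)^K/2" by simp
  have "(\<Sum>l<Suc K. (real l + 1) * (1/2::real) ^ l) = 4 - (2 * real K + 4) * (1/2) ^ K + (real K + 1) * (1/2) ^ K"
    using Suc by simp
  also have "\<dots> = 4 - (2 * real (Suc K) + 4) * (1/2) ^ (Suc K)"
    unfolding e by (simp add: algebra_simps)
  finally show ?case .
qed

lemma sum_half_lin: "(\<Sum>l<K. (real l + 1) * (1/2::real) ^ l) \<le> 4"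
  unfolding sum_half_lin_eq by simp

lemma exp_neg_nat_le: "exp (- real l) \<le> (1/2::real) ^ l"
proof -
  have "exp (-1::real) \<le> 1/2"
  proof -
    have "2 \<le> exp (1::real)" using exp_ge_add_one_self[of 1] by simp
    then show ?thesis by (simp add: exp_minus field_simps)
  qed
  then have "exp (-1::real) ^ l \<le> (1/2) ^ l" by (intro power_mono) auto
  moreover have "exp (-1::real) ^ l = exp (- real l)" by (simp add: exp_of_nat_mult[symmetric])
  ultimately show ?thesis by simp
qed

lemma total_bound:
  fixes Q :: int and b :: "nat \<Rightarrow> int" and \<kappa> :: real
  assumes Q: "prime Q" and fin: "finite I" and n5: "card I \<ge> 5"
    and inj: "inj_on (\<lambda>j. b j mod Q) I" and kp: "\<kappa> > 0"
  shows "(\<Sum>r\<in>{0..<Q}. exp (- \<kappa> * (Nrm Q b I r)\<^sup>2 / real_of_int Q ^ 2))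
    \<le> real_of_int Q * (32 * sqrt 40 / sqrt \<kappa>) / (real (card I) * sqrt (real (card I))) + 2
       + real_of_int Q * exp (- \<kappa> * real (card I) / 40)"
proof -
  have Qpos: "Q > 0" using Q prime_gt_0_int by blast
  define n where "n = real (card I)"
  have n5': "n \<ge> 5" using n5 by (simp add: n_def)
  define t0 where "t0 = real_of_int Q * sqrt (n / 40)"
  have t0p: "t0 > 0" using Qpos n5' by (simp add: t0_def)
  define M where "M = 4 * real_of_int Q / n"
  have cardR1: "real (card (Lv Q b I t0)) \<le> M"
    using Lv_small[OF Qpos fin _ inj] n5 by (simp add: t0_def M_def n_def)
  have MQ: "M < real_of_int Q" using Qpos n5' by (simp add: M_def field_simps)
  have M0: "M \<ge> 0" using Qpos n5' by (simp add: M_def)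
  define u where "u = real_of_int Q / sqrt \<kappa>"
  have up: "u > 0" using Qpos kp by (simp add: u_def)
  define R1 where "R1 = Lv Q b I t0"
  define f where "f = (\<lambda>r. exp (- \<kappa> * (Nrm Q b I r)\<^sup>2 / real_of_int Q ^ 2))"
  have R1sub: "R1 \<subseteq> {0..<Q}" by (auto simp: R1_def Lv_def)
  have finR1: "finite R1" using R1sub finite_subset by blast
  have split: "(\<Sum>r\<in>{0..<Q}. f r) = (\<Sum>r\<in>{0..<Q} - R1. f r) + (\<Sum>r\<in>R1. f r)"
    by (rule sum.subset_diff[OF R1sub]) simp
  have p2: "(\<Sum>r\<in>{0..<Q} - R1. f r) \<le> real_of_int Q * exp (- \<kappa> * n / 40)"
  proof -
    have "f r \<le> exp (- \<kappa> * n / 40)" if r: "r \<in> {0..<Q} - R1" for r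
    proof -
      have "Nrm Q b I r > t0" using r by (auto simp: R1_def Lv_def)
      then have "(Nrm Q b I r)\<^sup>2 \<ge> t0\<^sup>2" using t0p by (intro power_mono) auto
      moreover have "t0\<^sup>2 = real_of_int Q ^ 2 * n / 40" using n5' by (simp add: t0_def power_mult_distrib)
      ultimately have "\<kappa> * (Nrm Q b I r)\<^sup>2 / real_of_int Q ^ 2 \<ge> \<kappa> * n / 40"
        using Qpos kp by (simp add: field_simps)
      then show ?thesis unfolding f_def by simp
    qed
    then have "(\<Sum>r\<in>{0..<Q} - R1. f r) \<le> (\<Sum>r\<in>{0..<Q} - R1. exp (- \<kappa> * n / 40))" by (intro sum_mono) auto
    also have "\<dots> = real (card ({0..<Q} - R1)) * exp (- \<kappa> * n / 40)" by simp
    also have "\<dots> \<le> real_of_int Q * exp (- \<kappa> * n / 40)"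
    proof -
      have "card ({0..<Q} - R1) \<le> card {0..<Q}" by (intro card_mono) auto
      then have "real (card ({0..<Q} - R1)) \<le> real_of_int Q" using Qpos by simp
      then show ?thesis by (intro mult_right_mono) auto
    qed
    finally show ?thesis .
  qed
  define l where "l = (\<lambda>r. nat \<lfloor>Nrm Q b I r / u\<rfloor>)"
  have fl: "f r \<le> (1/2) ^ l r" for r
  proof -
    define x where "x = Nrm Q b I r / u"
    have x0: "x \<ge> 0" using up Nrm_nonneg[of Q b I r] by (simp add: x_def)
    have lx: "real (l r) \<le> x" using x0 by (simp add: l_def x_def[symmetric])
    have "\<kappa> * (Nrm Q b I r)\<^sup>2 / real_of_int Q ^ 2 = x\<^sup>2"
      using kp Qpos by (simp add: x_def u_def power_divide field_simps)
    moreover have "x\<^sup>2 \<ge> real (l r)"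
    proof -
      have "real (l r) \<le> real (l r) ^ 2" by (cases "l r") (auto simp: power2_eq_square)
      also have "\<dots> \<le> x\<^sup>2" using lx by (intro power_mono) auto
      finally show ?thesis .
    qed
    ultimately have "f r \<le> exp (- real (l r))" unfolding f_def by simp
    also have "\<dots> \<le> (1/2) ^ l r" by (rule exp_neg_nat_le)
    finally show ?thesis .
  qed
  have bucket: "real (card {r \<in> R1. l r = k}) \<le> 2 * M * u / t0 * (real k + 1) + 1" for k
  proof -
    define t where "t = min ((real k + 1) * u) t0"
    have tp: "0 < t" "t \<le> t0" using up t0p by (auto simp: t_def)
    have sub: "{r \<in> R1. l r = k} \<subseteq> Lv Q b I t"
    proof
      fix r assume r: "r \<in> {r \<in> R1. l r = k}"
      have x0: "Nrm Q b I r / u \<ge> 0" using up Nrm_nonneg[of Q b I r] by simp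
      have "Nrm Q b I r / u < real (l r) + 1" using x0 unfolding l_def by linarith
      then have "Nrm Q b I r < (real k + 1) * u" using r up by (simp add: field_simps)
      moreover have "Nrm Q b I r \<le> t0" "r \<in> {0..<Q}" using r by (auto simp: R1_def Lv_def)
      ultimately show "r \<in> Lv Q b I t" by (auto simp: Lv_def t_def)
    qed
    have finLt: "finite (Lv Q b I t)" unfolding Lv_def by (rule finite_subset[of _ "{0..<Q}"]) auto
    have "real (card {r \<in> R1. l r = k}) \<le> real (card (Lv Q b I t))"
      using card_mono[OF finLt sub] by simp
    also have "\<dots> \<le> 2 * M * t / t0 + 1" by (rule Lv_bound[OF Q tp cardR1[unfolded] MQ])
    also have "\<dots> \<le> 2 * M * ((real k + 1) * u) / t0 + 1"
      using M0 t0p up by (intro add_right_mono divide_right_mono mult_left_mono) (auto simp: t_def)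
    finally show ?thesis by (simp add: field_simps)
  qed
  obtain K where K: "l ` R1 \<subseteq> {..<K}" using finite_nat_bounded[OF finite_imageI[OF finR1]] by blast
  have p1: "(\<Sum>r\<in>R1. f r) \<le> 8 * M * u / t0 + 2"
  proof -
    have "(\<Sum>r\<in>R1. f r) \<le> (\<Sum>r\<in>R1. (1/2) ^ l r)" by (intro sum_mono fl)
    also have "\<dots> = (\<Sum>k\<in>l ` R1. \<Sum>r\<in>{r \<in> R1. l r = k}. (1/2) ^ l r)"
      by (rule sum.image_gen[OF finR1])
    also have "\<dots> = (\<Sum>k\<in>l ` R1. (1/2) ^ k * real (card {r \<in> R1. l r = k}))"
      by (rule sum.cong[OF refl]) simp
    also have "\<dots> \<le> (\<Sum>k\<in>l ` R1. (1/2) ^ k * (2 * M * u / t0 * (real k + 1) + 1))"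
      by (intro sum_mono mult_left_mono bucket) auto
    also have "\<dots> \<le> (\<Sum>k<K. (1/2) ^ k * (2 * M * u / t0 * (real k + 1) + 1))"
      using K M0 up t0p by (intro sum_mono2) auto
    also have "\<dots> = 2 * M * u / t0 * (\<Sum>k<K. (real k + 1) * (1/2) ^ k) + (\<Sum>k<K. (1/2::real) ^ k)"
    proof -
      define A where "A = 2 * M * u / t0"
      have e: "(1/2::real) ^ k * (A * (real k + 1) + 1) = A * ((real k + 1) * (1/2) ^ k) + (1/2) ^ k" for k
        by (simp add: algebra_simps)
      show ?thesis unfolding A_def[symmetric] e by (simp add: sum.distrib sum_distrib_left)
    qed
    also have "\<dots> \<le> 2 * M * u / t0 * 4 + 2"
      using sum_half_lin[of K] sum_half_geom[of K] M0 up t0p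
      by (intro add_mono mult_left_mono) auto
    finally show ?thesis by simp
  qed
  have eq: "8 * M * u / t0 = real_of_int Q * (32 * sqrt 40 / sqrt \<kappa>) / (n * sqrt n)"
  proof -
    have "sqrt (n / 40) = sqrt n / sqrt 40" by (simp add: real_sqrt_divide)
    then show ?thesis using Qpos n5' kp
      by (simp add: M_def u_def t0_def field_simps)
  qed
  show ?thesis using split p1 p2 eq unfolding f_def n_def by linarith
qed



lemma exp_neg_le_sq: fixes y :: real assumes "y > 0" shows "exp (- y) \<le> 4 / y\<^sup>2"
proof -
  have "1 + y / 2 \<le> exp (y / 2)" by (rule exp_ge_add_one_self)
  then have "y / 2 \<le> exp (y / 2)" by linarith
  then have "(y / 2)\<^sup>2 \<le> (exp (y / 2))\<^sup>2" using assms by (intro power_mono) auto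
  also have "(exp (y / 2))\<^sup>2 = exp y" by (simp add: power2_eq_square exp_add[symmetric])
  finally have "y\<^sup>2 / 4 \<le> exp y" by (simp add: power_divide)
  then have "1 / exp y \<le> 1 / (y\<^sup>2 / 4)" using assms by (intro divide_left_mono) auto
  then show ?thesis by (simp add: exp_minus field_simps)
qed

lemma nsqrt_le: fixes n :: real assumes "n \<ge> 1" shows "n * sqrt n \<le> n\<^sup>2" "n * sqrt n > 0"
proof -
  have "sqrt n \<le> n" using assms by (simp add: real_sqrt_le_iff') (smt (verit) assms mult_le_cancel_left1 power2_eq_square)
  then show "n * sqrt n \<le> n\<^sup>2" using assms by (simp add: power2_eq_square)
  show "n * sqrt n > 0" using assms by simp
qed

lemma abs_sum_PiE:
  fixes a :: "nat \<Rightarrow> int"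
  assumes x: "x \<in> PiE I (\<lambda>_. {-1,0,1::int})"
  shows "\<bar>\<Sum>j\<in>I. x j * a j\<bar> \<le> (\<Sum>j\<in>I. \<bar>a j\<bar>)"
proof -
  have "\<bar>\<Sum>j\<in>I. x j * a j\<bar> \<le> (\<Sum>j\<in>I. \<bar>x j * a j\<bar>)" by (rule sum_abs)
  also have "\<dots> \<le> (\<Sum>j\<in>I. \<bar>a j\<bar>)"
  proof (rule sum_mono)
    fix j assume "j \<in> I"
    then have "x j \<in> {-1,0,1}" using x by (auto simp: PiE_iff)
    then show "\<bar>x j * a j\<bar> \<le> \<bar>a j\<bar>" by (auto simp: abs_mult)
  qed
  finally show ?thesis .
qed



lemma core_large:
  fixes p :: "int \<Rightarrow> real" and \<kappa> :: real and h :: int and a :: "nat \<Rightarrow> int" and m :: int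
  assumes phi: "\<forall>Q>0. \<forall>z. norm (\<Sum>v\<in>{-1,0,1::int}. complex_of_real (p v) * om Q (v * z))
       \<le> exp (- \<kappa> * real_of_int (dQ Q (h * z)) ^ 2 / real_of_int Q ^ 2)"
    and kp: "\<kappa> > 0" and h: "h \<in> {1,2}" and nn: "\<And>v. p v \<ge> 0"
    and fin: "finite I" and n5: "card I \<ge> 5" and inj: "inj_on a I"
  shows "(\<Sum>x\<in>{x\<in>PiE I (\<lambda>_. {-1,0,1::int}). (\<Sum>j\<in>I. x j * a j) = m}. \<Prod>j\<in>I. p (x j))
    \<le> (32 * sqrt 40 / sqrt \<kappa> + 2 + 6400 / \<kappa>\<^sup>2) / (real (card I) * sqrt (real (card I)))"
proof -
  define n where "n = real (card I)"
  have n5': "n \<ge> 5" using n5 by (simp add: n_def)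
  define A where "A = (\<Sum>j\<in>I. \<bar>a j\<bar>)"
  have A0: "A \<ge> 0" by (simp add: A_def sum_nonneg)
  obtain q :: nat where q: "prime q" "q > nat (4 * A + 2 * \<bar>m\<bar> + int (card I) ^ 2 + 1)"
    using bigger_prime by blast
  define Q where "Q = int q"
  have Qp: "prime Q" using q by (simp add: Q_def)
  have Qbig: "Q > 4 * A + 2 * \<bar>m\<bar> + int (card I) ^ 2" using q A0 by (simp add: Q_def)
  have Qpos: "Q > 0" using Qp prime_gt_0_int by blast
  define b where "b = (\<lambda>j. h * a j)"
  define F where "F = (\<Sum>x\<in>{x\<in>PiE I (\<lambda>_. {-1,0,1::int}). (\<Sum>j\<in>I. x j * a j) = m}. \<Prod>j\<in>I. p (x j))"
  have F0: "F \<ge> 0" unfolding F_def by (intro sum_nonneg prod_nonneg nn)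
  have range: "Q dvd ((\<Sum>j\<in>I. x j * a j) - m) \<longleftrightarrow> (\<Sum>j\<in>I. x j * a j) = m"
    if x: "x \<in> PiE I (\<lambda>_. {-1,0,1::int})" for x
  proof
    assume d: "Q dvd ((\<Sum>j\<in>I. x j * a j) - m)"
    show "(\<Sum>j\<in>I. x j * a j) = m"
    proof (rule ccontr)
      assume "(\<Sum>j\<in>I. x j * a j) \<noteq> m"
      then have "\<bar>Q\<bar> \<le> \<bar>(\<Sum>j\<in>I. x j * a j) - m\<bar>" using d by (intro dvd_imp_le_int) auto
      moreover have "\<bar>(\<Sum>j\<in>I. x j * a j) - m\<bar> \<le> A + \<bar>m\<bar>" using abs_sum_PiE[OF x, of a] by (simp add: A_def)
      moreover have "\<bar>Q\<bar> = Q" using Qpos by simp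
      moreover have "0 \<le> int (card I) ^ 2" "0 \<le> \<bar>m\<bar>" by simp_all
      ultimately show False using Qbig A0 by linarith
    qed
  qed simp
  have injb: "inj_on (\<lambda>j. b j mod Q) I"
  proof (rule inj_onI)
    fix i j assume i: "i \<in> I" and j: "j \<in> I" and e: "b i mod Q = b j mod Q"
    have d: "Q dvd (b i - b j)" using e by (simp add: mod_eq_dvd_iff)
    have ai: "\<bar>a i\<bar> \<le> A" using i fin unfolding A_def by (intro member_le_sum) auto
    have aj: "\<bar>a j\<bar> \<le> A" using j fin unfolding A_def by (intro member_le_sum) auto
    have hb: "\<bar>h\<bar> \<le> 2" using h by auto
    have "\<bar>b i - b j\<bar> = \<bar>h\<bar> * \<bar>a i - a j\<bar>" by (simp add: b_def abs_mult right_diff_distrib[symmetric])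
    also have "\<dots> \<le> 2 * (2 * A)"
      using hb ai aj by (intro mult_mono) auto
    finally have "\<bar>b i - b j\<bar> \<le> 4 * A" by simp
    moreover have "0 \<le> int (card I) ^ 2" "0 \<le> \<bar>m\<bar>" by simp_all
    ultimately have "\<bar>b i - b j\<bar> < Q" using Qbig by linarith
    then have "b i = b j"
      using d dvd_imp_le_int[of "b i - b j" Q] by (cases "b i - b j = 0") auto
    then have "a i = a j" using h by (auto simp: b_def)
    then show "i = j" using inj i j unfolding inj_on_def by blast
  qed
  have four: "of_int Q * complex_of_real F
    = (\<Sum>r\<in>{0..<Q}. om Q (- (r * m)) * (\<Prod>j\<in>I. \<Sum>v\<in>{-1,0,1::int}. complex_of_real (p v) * om Q (r * v * a j)))"
    unfolding F_def by (rule fourier_count[OF Qpos fin]) (simp_all add: range)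
  have "real_of_int Q * F = norm (of_int Q * complex_of_real F)"
    using Qpos F0 by (simp add: norm_mult)
  also have "\<dots> \<le> (\<Sum>r\<in>{0..<Q}. norm (om Q (- (r * m)) * (\<Prod>j\<in>I. \<Sum>v\<in>{-1,0,1::int}. complex_of_real (p v) * om Q (r * v * a j))))"
    unfolding four by (rule norm_sum)
  also have "\<dots> \<le> (\<Sum>r\<in>{0..<Q}. exp (- \<kappa> * (Nrm Q b I r)\<^sup>2 / real_of_int Q ^ 2))"
  proof (rule sum_mono)
    fix r
    have "norm (om Q (- (r * m)) * (\<Prod>j\<in>I. \<Sum>v\<in>{-1,0,1::int}. complex_of_real (p v) * om Q (r * v * a j)))
        = norm (\<Prod>j\<in>I. \<Sum>v\<in>{-1,0,1::int}. complex_of_real (p v) * om Q (r * v * a j))"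
      by (simp add: norm_mult)
    also have "\<dots> \<le> (\<Prod>j\<in>I. norm (\<Sum>v\<in>{-1,0,1::int}. complex_of_real (p v) * om Q (r * v * a j)))"
      by (rule norm_prod_le)
    also have "\<dots> \<le> (\<Prod>j\<in>I. exp (- \<kappa> * real_of_int (dQ Q (r * b j)) ^ 2 / real_of_int Q ^ 2))"
    proof (rule prod_mono)
      fix j assume "j \<in> I"
      have e1: "(\<Sum>v\<in>{-1,0,1::int}. complex_of_real (p v) * om Q (r * v * a j))
          = (\<Sum>v\<in>{-1,0,1::int}. complex_of_real (p v) * om Q (v * (r * a j)))"
        by (rule sum.cong[OF refl]) (simp add: mult.commute mult.left_commute)
      have e2: "h * (r * a j) = r * b j" by (simp add: b_def)
      show "0 \<le> norm (\<Sum>v\<in>{-1,0,1::int}. complex_of_real (p v) * om Q (r * v * a j)) \<and>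
          norm (\<Sum>v\<in>{-1,0,1::int}. complex_of_real (p v) * om Q (r * v * a j))
            \<le> exp (- \<kappa> * real_of_int (dQ Q (r * b j)) ^ 2 / real_of_int Q ^ 2)"
        using phi Qpos unfolding e1 e2[symmetric] by simp
    qed
    also have "\<dots> = exp (\<Sum>j\<in>I. - \<kappa> * real_of_int (dQ Q (r * b j)) ^ 2 / real_of_int Q ^ 2)"
      using fin by (simp add: exp_sum)
    also have "(\<Sum>j\<in>I. - \<kappa> * real_of_int (dQ Q (r * b j)) ^ 2 / real_of_int Q ^ 2)
        = - \<kappa> * (Nrm Q b I r)\<^sup>2 / real_of_int Q ^ 2"
      unfolding Nrm_sq by (simp add: sum_divide_distrib sum_distrib_left)
    finally show "norm (om Q (- (r * m)) * (\<Prod>j\<in>I. \<Sum>v\<in>{-1,0,1::int}. complex_of_real (p v) * om Q (r * v * a j)))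
        \<le> exp (- \<kappa> * (Nrm Q b I r)\<^sup>2 / real_of_int Q ^ 2)" .
  qed
  also have "\<dots> \<le> real_of_int Q * (32 * sqrt 40 / sqrt \<kappa>) / (n * sqrt n) + 2 + real_of_int Q * exp (- \<kappa> * n / 40)"
    unfolding n_def by (rule total_bound[OF Qp fin n5 injb kp])
  finally have QF: "real_of_int Q * F \<le> real_of_int Q * (32 * sqrt 40 / sqrt \<kappa>) / (n * sqrt n) + 2 + real_of_int Q * exp (- \<kappa> * n / 40)" .
  have ns: "n * sqrt n \<le> n\<^sup>2" "n * sqrt n > 0" using nsqrt_le[of n] n5' by auto
  have Qn: "real_of_int Q \<ge> n\<^sup>2"
  proof -
    have "real_of_int Q > real_of_int (int (card I) ^ 2)" using Qbig A0 by linarith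
    then show ?thesis by (simp add: n_def)
  qed
  have t2: "2 / real_of_int Q \<le> 2 / (n * sqrt n)"
    using ns Qn by (intro divide_left_mono) auto
  have t3: "exp (- \<kappa> * n / 40) \<le> 6400 / \<kappa>\<^sup>2 / (n * sqrt n)"
  proof -
    have "exp (- (\<kappa> * n / 40)) \<le> 4 / (\<kappa> * n / 40)\<^sup>2" using kp n5' by (intro exp_neg_le_sq) auto
    also have "\<dots> = 6400 / \<kappa>\<^sup>2 / n\<^sup>2" by (simp add: power_divide power_mult_distrib)
    also have "\<dots> \<le> 6400 / \<kappa>\<^sup>2 / (n * sqrt n)"
      using ns kp n5' by (intro divide_left_mono) (auto intro!: mult_pos_pos)
    finally show ?thesis by simp
  qed
  have "F \<le> (32 * sqrt 40 / sqrt \<kappa>) / (n * sqrt n) + 2 / real_of_int Q + exp (- \<kappa> * n / 40)"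
  proof -
    have "F = (real_of_int Q * F) / real_of_int Q" using Qpos by simp
    also have "\<dots> \<le> (real_of_int Q * (32 * sqrt 40 / sqrt \<kappa>) / (n * sqrt n) + 2 + real_of_int Q * exp (- \<kappa> * n / 40)) / real_of_int Q"
      using QF Qpos by (intro divide_right_mono) auto
    also have "\<dots> = (32 * sqrt 40 / sqrt \<kappa>) / (n * sqrt n) + 2 / real_of_int Q + exp (- \<kappa> * n / 40)"
      using Qpos by (simp add: add_divide_distrib)
    finally show ?thesis .
  qed
  also have "\<dots> \<le> (32 * sqrt 40 / sqrt \<kappa>) / (n * sqrt n) + 2 / (n * sqrt n) + 6400 / \<kappa>\<^sup>2 / (n * sqrt n)"
    using t2 t3 by linarith
  also have "\<dots> = (32 * sqrt 40 / sqrt \<kappa> + 2 + 6400 / \<kappa>\<^sup>2) / (n * sqrt n)"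
    by (simp add: add_divide_distrib)
  finally show ?thesis unfolding F_def n_def .
qed



lemma F_le_1:
  fixes p :: "int \<Rightarrow> real"
  assumes nn: "\<And>v. p v \<ge> 0" and sum1: "p (-1) + p 0 + p 1 = 1" and fin: "finite I"
  shows "(\<Sum>x\<in>{x\<in>PiE I (\<lambda>_. {-1,0,1::int}). (\<Sum>j\<in>I. x j * a j) = m}. \<Prod>j\<in>I. p (x j)) \<le> 1"
proof -
  have "(\<Sum>x\<in>{x\<in>PiE I (\<lambda>_. {-1,0,1::int}). (\<Sum>j\<in>I. x j * a j) = m}. \<Prod>j\<in>I. p (x j))
      \<le> (\<Sum>x\<in>PiE I (\<lambda>_. {-1,0,1::int}). \<Prod>j\<in>I. p (x j))"
    using fin by (intro sum_mono2) (auto simp: finite_PiE intro: prod_nonneg nn)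
  also have "\<dots> = (\<Prod>j\<in>I. \<Sum>v\<in>{-1,0,1::int}. p v)"
    using fin by (rule prod_sum_PiE[symmetric]) auto
  also have "\<dots> = 1" using sum1 by (simp add: add.assoc)
  finally show ?thesis .
qed

lemma core:
  fixes p :: "int \<Rightarrow> real"
  assumes nn: "\<And>v. p v \<ge> 0" and sum1: "p (-1) + p 0 + p 1 = 1"
    and lt: "p (-1) < 1" "p 0 < 1" "p 1 < 1"
  shows "\<exists>C>0. \<forall>I (a :: nat \<Rightarrow> int) m. finite I \<longrightarrow> card I \<ge> 1 \<longrightarrow> inj_on a I \<longrightarrow>
    (\<Sum>x\<in>{x\<in>PiE I (\<lambda>_. {-1,0,1::int}). (\<Sum>j\<in>I. x j * a j) = m}. \<Prod>j\<in>I. p (x j))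
      \<le> C / (real (card I) * sqrt (real (card I)))"
proof -
  obtain \<kappa> h where kp: "\<kappa> > 0" and h: "h \<in> {1,2::int}" and phi: "\<forall>Q>0. \<forall>z.
     norm (\<Sum>v\<in>{-1,0,1::int}. complex_of_real (p v) * om Q (v * z))
       \<le> exp (- \<kappa> * real_of_int (dQ Q (h * z)) ^ 2 / real_of_int Q ^ 2)"
    using phi_bound[OF nn sum1 lt] by blast
  define K where "K = 32 * sqrt 40 / sqrt \<kappa> + 2 + 6400 / \<kappa>\<^sup>2"
  have K0: "K \<ge> 0" using kp by (simp add: K_def)
  show ?thesis
  proof (intro exI[of _ "8 + K"] conjI allI impI)
    show "0 < 8 + K" using K0 by simp
    fix I and a :: "nat \<Rightarrow> int" and m :: int
    assume fin: "finite I" and n1: "card I \<ge> 1" and inj: "inj_on a I"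
    define n where "n = real (card I)"
    have ns: "n * sqrt n > 0" using n1 by (simp add: n_def)
    show "(\<Sum>x\<in>{x\<in>PiE I (\<lambda>_. {-1,0,1::int}). (\<Sum>j\<in>I. x j * a j) = m}. \<Prod>j\<in>I. p (x j))
      \<le> (8 + K) / (real (card I) * sqrt (real (card I)))"
    proof (cases "card I \<ge> 5")
      case True
      have "(\<Sum>x\<in>{x\<in>PiE I (\<lambda>_. {-1,0,1::int}). (\<Sum>j\<in>I. x j * a j) = m}. \<Prod>j\<in>I. p (x j))
          \<le> K / (n * sqrt n)"
        unfolding K_def n_def by (rule core_large[OF phi kp h nn fin True inj])
      also have "\<dots> \<le> (8 + K) / (n * sqrt n)" using ns by (intro divide_right_mono) auto
      finally show ?thesis by (simp add: n_def)
    next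
      case False
      have n4: "n \<le> 4" using False by (simp add: n_def)
      have "sqrt n \<le> 2"
      proof -
        have "sqrt n \<le> sqrt 4" using n4 by (rule real_sqrt_le_mono)
        then show ?thesis by simp
      qed
      then have "n * sqrt n \<le> 4 * 2" using n4 ns n1 by (intro mult_mono) (auto simp: n_def)
      then have "1 \<le> (8 + K) / (n * sqrt n)" using ns K0 by (simp add: field_simps)
      then show ?thesis using F_le_1[OF nn sum1 fin, of a m] by (simp add: n_def)
    qed
  qed
qed



theorem corollary3p2:
  fixes M :: "'a measure" and \<xi> :: "nat \<Rightarrow> 'a \<Rightarrow> int"
  assumes "prob_space M"
    and indep: "prob_space.indep_vars M (\<lambda>_. count_space UNIV) \<xi> {1..}"
    and ident: "\<And>j. j \<ge> 1 \<Longrightarrow>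
        distr M (count_space UNIV) (\<xi> j) = distr M (count_space UNIV) (\<xi> 1)"
    and vals: "\<And>j \<omega>. j \<ge> 1 \<Longrightarrow> \<omega> \<in> space M \<Longrightarrow> \<xi> j \<omega> \<in> {-1, 0, 1}"
    and small: "\<And>x. x \<in> {-1, 0, 1::int} \<Longrightarrow>
        measure M {\<omega> \<in> space M. \<xi> 1 \<omega> = x} < 1 / sqrt 3"
  shows "\<exists>C>0. \<forall>N::nat. N \<ge> 1 \<longrightarrow> (\<forall>a :: nat \<Rightarrow> int. inj_on a {1..N} \<longrightarrow>
           (\<forall>m::int. measure M {\<omega> \<in> space M. (\<Sum>j=1..N. \<xi> j \<omega> * a j) = m}
                       \<le> C / (real N) powr (3/2)))"
proof -
  interpret prob_space M by fact
  have meas: "\<xi> j \<in> measurable M (count_space UNIV)" if "j \<ge> 1" for j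
    using indep that unfolding indep_vars_def by auto
  define p where "p = (\<lambda>v. measure M (\<xi> 1 -` {v} \<inter> space M))"
  have pset: "{\<omega> \<in> space M. \<xi> 1 \<omega> = v} = \<xi> 1 -` {v} \<inter> space M" for v by auto
  have nn: "\<And>v. p v \<ge> 0" by (simp add: p_def)
  have pj: "measure M (\<xi> j -` {v} \<inter> space M) = p v" if "j \<ge> 1" for j v
  proof -
    have "measure M (\<xi> j -` {v} \<inter> space M) = measure (distr M (count_space UNIV) (\<xi> j)) {v}"
      by (rule measure_distr[OF meas[OF that], symmetric]) simp
    also have "\<dots> = measure (distr M (count_space UNIV) (\<xi> 1)) {v}" using ident[OF that] by simp
    also have "\<dots> = p v" unfolding p_def by (rule measure_distr[OF meas]) auto
    finally show ?thesis .
  qed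
  have sets1: "\<xi> j -` {v} \<inter> space M \<in> sets M" if "j \<ge> 1" for j v
    using meas[OF that] by (rule measurable_sets) simp
  have sum1: "p (-1) + p 0 + p 1 = 1"
  proof -
    have sp: "space M = (\<xi> 1 -` {-1} \<inter> space M) \<union> (\<xi> 1 -` {0} \<inter> space M) \<union> (\<xi> 1 -` {1} \<inter> space M)"
      using vals[of 1] by auto
    have "1 = measure M (space M)" by (simp add: prob_space)
    also have "\<dots> = measure M ((\<xi> 1 -` {-1} \<inter> space M) \<union> (\<xi> 1 -` {0} \<inter> space M)) + measure M (\<xi> 1 -` {1} \<inter> space M)"
      by (subst sp, rule finite_measure_Union) (auto intro!: sets1)
    also have "measure M ((\<xi> 1 -` {-1} \<inter> space M) \<union> (\<xi> 1 -` {0} \<inter> space M)) = p (-1) + p 0"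
      unfolding p_def by (rule finite_measure_Union) (auto intro!: sets1)
    finally show ?thesis unfolding p_def by simp
  qed
  have s3: "1 / sqrt 3 < (1::real)" by simp
  have lt0: "p v < 1 / sqrt 3" if "v \<in> {-1,0,1}" for v
    using small[OF that] unfolding pset by (simp add: p_def)
  have lt: "p (-1) < 1" "p 0 < 1" "p 1 < 1"
    using less_trans[OF lt0[of "-1"] s3] less_trans[OF lt0[of 0] s3] less_trans[OF lt0[of 1] s3] by auto
  obtain C where C: "C > 0" and Cb: "\<forall>I (a :: nat \<Rightarrow> int) m. finite I \<longrightarrow> card I \<ge> 1 \<longrightarrow> inj_on a I \<longrightarrow>
    (\<Sum>x\<in>{x\<in>PiE I (\<lambda>_. {-1,0,1::int}). (\<Sum>j\<in>I. x j * a j) = m}. \<Prod>j\<in>I. p (x j))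
      \<le> C / (real (card I) * sqrt (real (card I)))"
    using core[OF nn sum1 lt] by blast
  show ?thesis
  proof (intro exI[of _ C] conjI allI impI)
    show "C > 0" by fact
    fix N :: nat and a :: "nat \<Rightarrow> int" and m :: int
    assume N1: "N \<ge> 1" and inj: "inj_on a {1..N}"
    define I where "I = {1..N}"
    define X where "X = {x\<in>PiE I (\<lambda>_. {-1,0,1::int}). (\<Sum>j\<in>I. x j * a j) = m}"
    define E where "E = (\<lambda>x. {\<omega> \<in> space M. \<forall>j\<in>I. \<xi> j \<omega> = x j})"
    have finI: "finite I" and Ine: "I \<noteq> {}" and I1: "\<And>j. j \<in> I \<Longrightarrow> j \<ge> 1"
      using N1 by (auto simp: I_def)
    have finX: "finite X" unfolding X_def using finI by (auto intro: finite_subset[OF _ finite_PiE[of I "\<lambda>_. {-1,0,1::int}"]])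
    have Eint: "E x = (\<Inter>j\<in>I. \<xi> j -` {x j} \<inter> space M)" for x
      using Ine by (auto simp: E_def)
    have Esets: "E x \<in> sets M" for x
      unfolding Eint using finI Ine by (intro sets.finite_INT) (auto intro!: sets1 I1)
    have eqset: "{\<omega> \<in> space M. (\<Sum>j=1..N. \<xi> j \<omega> * a j) = m} = (\<Union>x\<in>X. E x)"
    proof
      show "{\<omega> \<in> space M. (\<Sum>j=1..N. \<xi> j \<omega> * a j) = m} \<subseteq> (\<Union>x\<in>X. E x)"
      proof
        fix \<omega> assume \<omega>: "\<omega> \<in> {\<omega> \<in> space M. (\<Sum>j=1..N. \<xi> j \<omega> * a j) = m}"
        define x where "x = restrict (\<lambda>j. \<xi> j \<omega>) I"
        have "x \<in> PiE I (\<lambda>_. {-1,0,1::int})" using \<omega> vals I1 by (auto simp: x_def)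
        moreover have "(\<Sum>j\<in>I. x j * a j) = m" using \<omega> by (simp add: x_def I_def)
        ultimately have "x \<in> X" by (simp add: X_def)
        moreover have "\<omega> \<in> E x" using \<omega> by (simp add: E_def x_def)
        ultimately show "\<omega> \<in> (\<Union>x\<in>X. E x)" by blast
      qed
    next
      show "(\<Union>x\<in>X. E x) \<subseteq> {\<omega> \<in> space M. (\<Sum>j=1..N. \<xi> j \<omega> * a j) = m}"
      proof
        fix \<omega> assume "\<omega> \<in> (\<Union>x\<in>X. E x)"
        then obtain x where x: "x \<in> X" and w: "\<omega> \<in> E x" by blast
        have "(\<Sum>j=1..N. \<xi> j \<omega> * a j) = (\<Sum>j\<in>I. x j * a j)"
          using w by (intro sum.cong) (auto simp: E_def I_def)
        then show "\<omega> \<in> {\<omega> \<in> space M. (\<Sum>j=1..N. \<xi> j \<omega> * a j) = m}" using x w by (auto simp: X_def E_def)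
      qed
    qed
    have disj: "disjoint_family_on E X"
      unfolding disjoint_family_on_def
    proof (intro ballI impI)
      fix x y assume x: "x \<in> X" and y: "y \<in> X" and ne: "x \<noteq> y"
      have "\<exists>j\<in>I. x j \<noteq> y j"
      proof (rule ccontr)
        assume "\<not> (\<exists>j\<in>I. x j \<noteq> y j)"
        then have "x = y" using x y by (intro PiE_ext[of x I "\<lambda>_. {-1,0,1::int}"]) (auto simp: X_def)
        then show False using ne by simp
      qed
      then show "E x \<inter> E y = {}" by (auto simp: E_def)
    qed
    have mE: "measure M (E x) = (\<Prod>j\<in>I. p (x j))" for x
    proof -
      have "measure M (E x) = (\<Prod>j\<in>I. measure M (\<xi> j -` {x j} \<inter> space M))"
        unfolding Eint by (rule indep_varsD[OF indep Ine finI]) (auto simp: I_def)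
      also have "\<dots> = (\<Prod>j\<in>I. p (x j))" by (rule prod.cong[OF refl]) (rule pj[OF I1])
      finally show ?thesis .
    qed
    have "measure M {\<omega> \<in> space M. (\<Sum>j=1..N. \<xi> j \<omega> * a j) = m} = (\<Sum>x\<in>X. measure M (E x))"
      unfolding eqset by (rule measure_finite_Union[OF finX]) (auto intro: Esets disj simp: emeasure_finite)
    also have "\<dots> = (\<Sum>x\<in>X. \<Prod>j\<in>I. p (x j))" by (simp add: mE)
    also have "\<dots> \<le> C / (real (card I) * sqrt (real (card I)))"
    proof -
      have "card I \<ge> 1" using N1 by (simp add: I_def)
      moreover have "inj_on a I" using inj by (simp add: I_def)
      ultimately show ?thesis unfolding X_def using Cb finI by blast
    qed
    also have "real (card I) * sqrt (real (card I)) = real N powr (3/2)"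
    proof -
      have "real N powr (3/2) = real N powr (1 + 1/2)" by simp
      also have "\<dots> = real N powr 1 * real N powr (1/2)" by (rule powr_add)
      also have "\<dots> = real N * sqrt (real N)" using N1 by (simp add: powr_half_sqrt)
      finally show ?thesis by (simp add: I_def)
    qed
    finally show "measure M {\<omega> \<in> space M. (\<Sum>j=1..N. \<xi> j \<omega> * a j) = m} \<le> C / real N powr (3/2)" .
  qed
qed


end
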